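(* Let $n\ge 1$ and $d\ge 1$ be integers, let $\mathcal{X}\subset\mathbb{R}^d$ be compact and convex, let $\mathbf{x}_0\in\mathcal{X}$, let $w_0,w_1,\dots,w_n\in\mathbb{R}$, and let $\mathbf{t}_1,\dots,\mathbf{t}_n\in\mathbb{R}^d$. Consider the $n$-player game $G$ in which player $i\in[n]$ chooses $\mathbf{x}_i\in\mathcal{X}$ and incurs the loss $\ell_i(\mathbf{x}_1,\dots,\mathbf{x}_n)=\|w_0\mathbf{x}_0+\sum_{j=1}^n w_j\mathbf{x}_j-\mathbf{t}_i\|_2^2$. Let $\phi(\mathbf{x}_1,\dots,\mathbf{x}_n)=\|\sum_{i=0}^n w_i\mathbf{x}_i\|_2^2-2\sum_{i=1}^n w_i\mathbf{t}_i^\top\mathbf{x}_i$. Then the set of pure Nash equilibria of $G$ equals $\operatorname{argmin}_{\mathbf{x}\in\mathcal{X}^n}\phi(\mathbf{x})$.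
   Context: A pure Nash equilibrium of $G$ is a profile $\mathbf{x}=(\mathbf{x}_1,\dots,\mathbf{x}_n)\in\mathcal{X}^n$ such that $\ell_i(\mathbf{x}_i,\mathbf{x}_{-i})\le\ell_i(\mathbf{y},\mathbf{x}_{-i})$ for all $\mathbf{y}\in\mathcal{X}$ and all $i\in[n]$, where $(\mathbf{y},\mathbf{x}_{-i})$ denotes the profile with player $i$'s action replaced by $\mathbf{y}$. *)

theory Defs
  imports "HOL-Analysis.Analysis"
begin

text \<open>Players are the elements of a finite type 'n (so n = CARD('n) \<ge> 1);
  actions live in R^d = real^'d (d = CARD('d) \<ge> 1). A profile is a function
  from players to actions.\<close>

definition profiles :: "'v set \<Rightarrow> ('n \<Rightarrow> 'v) set" where
  "profiles X = {x. \<forall>i. x i \<in> X}"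

definition pure_nash :: "'v set \<Rightarrow> ('n \<Rightarrow> ('n \<Rightarrow> 'v) \<Rightarrow> real) \<Rightarrow> ('n \<Rightarrow> 'v) \<Rightarrow> bool" where
  "pure_nash X l x \<longleftrightarrow> x \<in> profiles X \<and>
     (\<forall>i. \<forall>y\<in>X. l i x \<le> l i (x(i := y)))"

definition argmin_on :: "('a \<Rightarrow> real) \<Rightarrow> 'a set \<Rightarrow> 'a set" where
  "argmin_on f S = {x \<in> S. \<forall>y\<in>S. f x \<le> f y}"

definition aggregate :: "real \<Rightarrow> real^'d \<Rightarrow> ('n::finite \<Rightarrow> real) \<Rightarrow> ('n \<Rightarrow> real^'d) \<Rightarrow> real^'d" where
  "aggregate w0 x0 w x = w0 *\<^sub>R x0 + (\<Sum>j\<in>UNIV. w j *\<^sub>R x j)"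

definition game_loss :: "real \<Rightarrow> real^'d \<Rightarrow> ('n::finite \<Rightarrow> real) \<Rightarrow> ('n \<Rightarrow> real^'d)
    \<Rightarrow> 'n \<Rightarrow> ('n \<Rightarrow> real^'d) \<Rightarrow> real" where
  "game_loss w0 x0 w t i x = (norm (aggregate w0 x0 w x - t i))\<^sup>2"

definition potential :: "real \<Rightarrow> real^'d \<Rightarrow> ('n::finite \<Rightarrow> real) \<Rightarrow> ('n \<Rightarrow> real^'d)
    \<Rightarrow> ('n \<Rightarrow> real^'d) \<Rightarrow> real" where
  "potential w0 x0 w t x = (norm (aggregate w0 x0 w x))\<^sup>2 - 2 * (\<Sum>i\<in>UNIV. w i * (t i \<bullet> x i))"

end

theory Submission
  imports Defs
begin

lemma agg_shift:
  fixes x z :: "'n::finite \<Rightarrow> real^'d"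
  shows "aggregate w0 x0 w z = aggregate w0 x0 w x + (\<Sum>j\<in>UNIV. w j *\<^sub>R (z j - x j))"
  unfolding aggregate_def by (simp add: scaleR_diff_right sum_subtractf)

lemma sum_upd:
  fixes x :: "'n::finite \<Rightarrow> real^'d"
  shows "(\<Sum>j\<in>UNIV. f j ((x(i:=y)) j - x j)) = f i (y - x i) + (\<Sum>j\<in>UNIV-{i}. f j 0)"
proof -
  have "(\<Sum>j\<in>UNIV. f j ((x(i:=y)) j - x j)) = f i ((x(i:=y)) i - x i) + (\<Sum>j\<in>UNIV-{i}. f j ((x(i:=y)) j - x j))"
    using sum.remove[of UNIV i "\<lambda>j. f j ((x(i:=y)) j - x j)"] by simp
  also have "(\<Sum>j\<in>UNIV-{i}. f j ((x(i:=y)) j - x j)) = (\<Sum>j\<in>UNIV-{i}. f j 0)"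
    by (rule sum.cong) auto
  finally show ?thesis by simp
qed

lemma pot_diff:
  fixes x z :: "'n::finite \<Rightarrow> real^'d"
  shows "potential w0 x0 w t z - potential w0 x0 w t x =
    2 * (\<Sum>i\<in>UNIV. w i * ((z i - x i) \<bullet> (aggregate w0 x0 w x - t i)))
    + (norm (\<Sum>j\<in>UNIV. w j *\<^sub>R (z j - x j)))\<^sup>2"
proof -
  define A where "A = aggregate w0 x0 w x"
  define D where "D = (\<Sum>j\<in>UNIV. w j *\<^sub>R (z j - x j))"
  have Az: "aggregate w0 x0 w z = A + D" unfolding A_def D_def by (rule agg_shift)
  have "A \<bullet> D = (\<Sum>i\<in>UNIV. w i * ((z i - x i) \<bullet> A))"
    unfolding D_def by (simp add: inner_sum_right inner_commute)
  moreover have "(\<Sum>i\<in>UNIV. w i * (t i \<bullet> z i)) - (\<Sum>i\<in>UNIV. w i * (t i \<bullet> x i))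
      = (\<Sum>i\<in>UNIV. w i * ((z i - x i) \<bullet> t i))"
    by (simp add: sum_subtractf[symmetric] inner_diff_left inner_commute algebra_simps)
  moreover have "(\<Sum>i\<in>UNIV. w i * ((z i - x i) \<bullet> (A - t i))) =
     (\<Sum>i\<in>UNIV. w i * ((z i - x i) \<bullet> A)) - (\<Sum>i\<in>UNIV. w i * ((z i - x i) \<bullet> t i))"
    by (simp add: sum_subtractf[symmetric] inner_diff_right algebra_simps)
  ultimately show ?thesis
    unfolding potential_def Az A_def[symmetric] D_def[symmetric]
    by (simp add: power2_norm_eq_inner inner_add_left inner_add_right inner_commute algebra_simps)
qed

lemma pot_upd:
  fixes x :: "'n::finite \<Rightarrow> real^'d"
  shows "potential w0 x0 w t (x(i:=y)) - potential w0 x0 w t x =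
    2 * w i * ((y - x i) \<bullet> (aggregate w0 x0 w x - t i)) + (w i)\<^sup>2 * (norm (y - x i))\<^sup>2"
proof -
  have "(\<Sum>j\<in>UNIV. w j * (((x(i:=y)) j - x j) \<bullet> (aggregate w0 x0 w x - t j)))
     = w i * ((y - x i) \<bullet> (aggregate w0 x0 w x - t i))"
    using sum_upd[of "\<lambda>j v. w j * (v \<bullet> (aggregate w0 x0 w x - t j))" x i y] by simp
  moreover have "(\<Sum>j\<in>UNIV. w j *\<^sub>R ((x(i:=y)) j - x j)) = w i *\<^sub>R (y - x i)"
    using sum_upd[of "\<lambda>j v. w j *\<^sub>R v" x i y] by simp
  ultimately show ?thesis unfolding pot_diff
    by (simp add: power_mult_distrib)
qed

lemma sq_shift:
  fixes A T v :: "real^'d"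
  shows "(norm (A + c *\<^sub>R v - T))\<^sup>2 - (norm (A - T))\<^sup>2 = 2 * c * (v \<bullet> (A - T)) + c\<^sup>2 * (norm v)\<^sup>2"
proof -
  have "A + c *\<^sub>R v - T = (A - T) + c *\<^sub>R v" by simp
  then show ?thesis
    by (simp only: power2_norm_eq_inner inner_add_left inner_add_right inner_scaleR_left
        inner_scaleR_right inner_commute[of v "A - T"]) (simp add: power2_eq_square algebra_simps)
qed

lemma loss_upd:
  fixes x :: "'n::finite \<Rightarrow> real^'d"
  shows "game_loss w0 x0 w t i (x(i:=y)) - game_loss w0 x0 w t i x =
    2 * w i * ((y - x i) \<bullet> (aggregate w0 x0 w x - t i)) + (w i)\<^sup>2 * (norm (y - x i))\<^sup>2"
proof -
  have "aggregate w0 x0 w (x(i:=y)) = aggregate w0 x0 w x + w i *\<^sub>R (y - x i)"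
    using agg_shift[of w0 x0 w "x(i:=y)" x] sum_upd[of "\<lambda>j v. w j *\<^sub>R v" x i y] by simp
  then show ?thesis unfolding game_loss_def by (simp only: sq_shift)
qed

lemma small_s:
  fixes a b :: real
  assumes "\<And>s. 0 < s \<Longrightarrow> s \<le> 1 \<Longrightarrow> 0 \<le> s * a + s\<^sup>2 * b"
  shows "0 \<le> a"
proof (rule ccontr)
  assume "\<not> 0 \<le> a"
  hence a: "a < 0" by simp
  define s where "s = min 1 (- a / (2 * \<bar>b\<bar> + 1))"
  have s0: "0 < s" using a unfolding s_def by (simp add: field_simps)
  have s1: "s \<le> 1" unfolding s_def by simp
  have "s * \<bar>b\<bar> \<le> (- a / (2 * \<bar>b\<bar> + 1)) * \<bar>b\<bar>"
    unfolding s_def by (intro mult_right_mono) auto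
  also have "\<dots> < - a / 2 + 0"
    using a by (simp add: field_simps)
  finally have sb: "s * \<bar>b\<bar> < - a / 2" by simp
  have "s * a + s\<^sup>2 * b \<le> s * (a + s * \<bar>b\<bar>)"
    using s0 by (simp add: power2_eq_square algebra_simps mult_left_mono abs_ge_self)
  also have "\<dots> < 0" using s0 sb a by (simp add: mult_pos_neg)
  finally show False using assms[OF s0 s1] by simp
qed

theorem proposition1:
  fixes X :: "(real^'d) set" and x0 :: "real^'d" and w0 :: real
    and w :: "'n::finite \<Rightarrow> real" and t :: "'n \<Rightarrow> real^'d"
  assumes "compact X" and "convex X" and "x0 \<in> X"
  shows "{x. pure_nash X (game_loss w0 x0 w t) x} = argmin_on (potential w0 x0 w t) (profiles X)"
proof (intro set_eqI iffI)
  fix x assume "x \<in> argmin_on (potential w0 x0 w t) (profiles X)"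
  hence xp: "x \<in> profiles X" and m: "\<And>z. z \<in> profiles X \<Longrightarrow> potential w0 x0 w t x \<le> potential w0 x0 w t z"
    unfolding argmin_on_def by auto
  show "x \<in> {x. pure_nash X (game_loss w0 x0 w t) x}"
    unfolding pure_nash_def
  proof (intro CollectI conjI xp allI ballI)
    fix i y assume "y \<in> X"
    hence "x(i:=y) \<in> profiles X" using xp unfolding profiles_def by auto
    from m[OF this] show "game_loss w0 x0 w t i x \<le> game_loss w0 x0 w t i (x(i := y))"
      using pot_upd[of w0 x0 w t x i y] loss_upd[of w0 x0 w t i x y] by linarith
  qed
next
  fix x assume "x \<in> {x. pure_nash X (game_loss w0 x0 w t) x}"
  hence xp: "x \<in> profiles X" and n: "\<And>i y. y \<in> X \<Longrightarrow> game_loss w0 x0 w t i x \<le> game_loss w0 x0 w t i (x(i:=y))"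
    unfolding pure_nash_def by auto
  define A where "A = aggregate w0 x0 w x"
  have key: "0 \<le> w i * ((y - x i) \<bullet> (A - t i))" if y: "y \<in> X" for i y
  proof -
    have "0 \<le> s * (2 * w i * ((y - x i) \<bullet> (A - t i))) + s\<^sup>2 * ((w i)\<^sup>2 * (norm (y - x i))\<^sup>2)"
      if s: "0 < s" "s \<le> 1" for s
    proof -
      have hn: "norm (x i + s *\<^sub>R (y - x i) - x i) = s * norm (y - x i)" using s by simp
      have hi: "(x i + s *\<^sub>R (y - x i) - x i) = s *\<^sub>R (y - x i)" by simp
      have xi: "x i \<in> X" using xp unfolding profiles_def by auto
      have "x i + s *\<^sub>R (y - x i) = (1 - s) *\<^sub>R x i + s *\<^sub>R y" by (simp add: algebra_simps)
      also have "\<dots> \<in> X" using assms(2) xi y s unfolding convex_def by auto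
      finally have "0 \<le> game_loss w0 x0 w t i (x(i:=x i + s *\<^sub>R (y - x i))) - game_loss w0 x0 w t i x"
        using n by force
      also have "\<dots> = s * (2 * w i * ((y - x i) \<bullet> (A - t i))) + s\<^sup>2 * ((w i)\<^sup>2 * (norm (y - x i))\<^sup>2)"
        unfolding loss_upd A_def[symmetric] hi inner_scaleR_left norm_scaleR using s
        by (simp add: power_mult_distrib power2_eq_square algebra_simps del: scaleR_diff_right)
      finally show ?thesis .
    qed
    from small_s[OF this] show ?thesis by simp
  qed
  show "x \<in> argmin_on (potential w0 x0 w t) (profiles X)"
    unfolding argmin_on_def
  proof (intro CollectI conjI xp ballI)
    fix z :: "'n \<Rightarrow> real^'d" assume "z \<in> profiles X"
    hence "\<forall>i. z i \<in> X" unfolding profiles_def by auto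
    hence "0 \<le> (\<Sum>i\<in>UNIV. w i * ((z i - x i) \<bullet> (A - t i)))"
      using key by (intro sum_nonneg) auto
    thus "potential w0 x0 w t x \<le> potential w0 x0 w t z"
      using pot_diff[of w0 x0 w t z x] unfolding A_def
      by (smt (verit) zero_le_power2)
  qed
qed

end
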